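(* Consider the following water-filling process. Set $\pi^1=0\in\mathbb{R}^N$ and $W^1_a=W$. While $W^t_a\neq\emptyset$: let $$\Delta\pi^t=\min_{S\subseteq N,\ W^t_a\not\subseteq S}\ \frac{w(N)-w(S)-\sum_{i\in N\setminus S}\pi^t_i}{|W^t_a\setminus S|},$$ let $S^*$ be any coalition attaining this minimum, set $W^t_f=W^t_a\setminus S^*$, define $\pi^{t+1}_i=\pi^t_i+\Delta\pi^t$ for $i\in W^t_a$ and $\pi^{t+1}_i=\pi^t_i$ otherwise, set $W^{t+1}_a=W^t_a\setminus W^t_f$, and increase $t$ by one. Then this process terminates after at most $|W|$ iterations, and the final vector $\pi^T$ (where $W^T_a=\emptyset$) is the BLO outcome.
   Context: A combinatorial auction (CA) has a finite set of bidders $N=\{1,\dots,n\}$, a finite set of items $M$, and for each bidder $i$ a valuation $v_i:2^M\to\mathbb{R}_{\ge 0}$ with $v_i(\emptyset)=0$. For $S\subseteq N$ let $w(S)=\max\{\sum_{i\in S}v_i(a_i): a_i\subseteq M,\ a_i\cap a_j=\emptyset\ (i\ne j)\}$ (with $w(\emptyset)=0$). Fix an allocation $(a^*_i)_{i\in N}$ attaining $w(N)$; the winner set is $W=\{i: a^*_i\neq\emptyset\}$. The core is $U=\{\pi\in\mathbb{R}^N:\ \pi_i\ge 0\ \forall i\in N,\ \sum_{i\in N\setminus S}\pi_i\le w(N)-w(S)\ \forall S\subseteq N\}$. (Equivalently, $\Delta\pi^t$ above is the largest $\Delta$ such that increasing the utility of every bidder in $W^t_a$ by $\Delta$, keeping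 the others fixed, stays in $U$.) For $x,y\in\mathbb{R}^n$, $x$ leximin-dominates $y$ if, writing $x_{(1)}\le\dots\le x_{(n)}$ and $y_{(1)}\le\dots\le y_{(n)}$ for the sorted entries, there is $0\le k\le n-1$ with $x_{(j)}=y_{(j)}$ for $j\le k$ and $x_{(k+1)}>y_{(k+1)}$. The BLO outcome is the (unique) $\pi\in U$ not leximin-dominated by any $\pi'\in U$. *)

theory Defs
  imports Complex_Main "HOL-Library.Multiset"
begin

(* Bidders are the elements of a finite type 'b (so N = UNIV), items are the
   elements of a finite type 'm (so M = UNIV).  A valuation profile is
   v :: 'b => 'm set => real. *)

definition feasible_alloc :: "'b set \<Rightarrow> ('b \<Rightarrow> 'm set) \<Rightarrow> bool" where
  "feasible_alloc S a \<longleftrightarrow> (\<forall>i\<in>S. \<forall>j\<in>S. i \<noteq> j \<longrightarrow> a i \<inter> a j = {})"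

definition coal_value :: "('b \<Rightarrow> 'm set \<Rightarrow> real) \<Rightarrow> 'b set \<Rightarrow> real" where
  "coal_value v S = Max {(\<Sum>i\<in>S. v i (a i)) | a. feasible_alloc S a}"

definition core :: "('b::finite \<Rightarrow> 'm set \<Rightarrow> real) \<Rightarrow> ('b \<Rightarrow> real) set" where
  "core v = {\<pi>. (\<forall>i. 0 \<le> \<pi> i) \<and>
      (\<forall>S. (\<Sum>i\<in>UNIV - S. \<pi> i) \<le> coal_value v UNIV - coal_value v S)}"

definition sorted_entries :: "('b::finite \<Rightarrow> real) \<Rightarrow> real list" where
  "sorted_entries x = sorted_list_of_multiset (image_mset x (mset_set UNIV))"

definition leximin_dominates :: "('b::finite \<Rightarrow> real) \<Rightarrow> ('b \<Rightarrow> real) \<Rightarrow> bool" where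
  "leximin_dominates x y \<longleftrightarrow>
     (\<exists>k. k < card (UNIV :: 'b set) \<and> (\<forall>j<k. sorted_entries x ! j = sorted_entries y ! j)
                      \<and> sorted_entries x ! k > sorted_entries y ! k)"

definition BLO_outcome :: "('b::finite \<Rightarrow> 'm set \<Rightarrow> real) \<Rightarrow> ('b \<Rightarrow> real) \<Rightarrow> bool" where
  "BLO_outcome v \<pi> \<longleftrightarrow> \<pi> \<in> core v \<and> \<not> (\<exists>\<pi>'\<in>core v. leximin_dominates \<pi>' \<pi>)"

definition wf_ratio :: "('b::finite \<Rightarrow> 'm set \<Rightarrow> real) \<Rightarrow> ('b \<Rightarrow> real) \<Rightarrow> 'b set \<Rightarrow> 'b set \<Rightarrow> real" where
  "wf_ratio v \<pi> Wa S =
     (coal_value v UNIV - coal_value v S - (\<Sum>i\<in>UNIV - S. \<pi> i)) / real (card (Wa - S))"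

definition wf_delta :: "('b::finite \<Rightarrow> 'm set \<Rightarrow> real) \<Rightarrow> ('b \<Rightarrow> real) \<Rightarrow> 'b set \<Rightarrow> real" where
  "wf_delta v \<pi> Wa = Min {wf_ratio v \<pi> Wa S | S. \<not> Wa \<subseteq> S}"

definition wf_step :: "('b::finite \<Rightarrow> 'm set \<Rightarrow> real) \<Rightarrow> ('b \<Rightarrow> real) \<Rightarrow> 'b set
      \<Rightarrow> ('b \<Rightarrow> real) \<Rightarrow> 'b set \<Rightarrow> bool" where
  "wf_step v \<pi> Wa \<pi>' Wa' \<longleftrightarrow>
     (\<exists>Sstar. \<not> Wa \<subseteq> Sstar \<and> wf_ratio v \<pi> Wa Sstar = wf_delta v \<pi> Wa \<and>
        (\<forall>i. \<pi>' i = (if i \<in> Wa then \<pi> i + wf_delta v \<pi> Wa else \<pi> i)) \<and>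
        Wa' = Wa - (Wa - Sstar))"

end

theory Submission
  imports Defs
begin

lemma se_sorted: "sorted (sorted_entries x)" for x :: "'b::finite \<Rightarrow> real"
  by (simp add: sorted_entries_def)

lemma se_length: "length (sorted_entries x) = card (UNIV::'b set)" for x :: "'b::finite \<Rightarrow> real"
  unfolding sorted_entries_def
  by (metis size_mset mset_sorted_list_of_multiset size_image_mset size_mset_set)

lemma se_count: "length (filter (\<lambda>z. z \<le> d) (sorted_entries x)) = card {i. x i \<le> d}" for x :: "'b::finite \<Rightarrow> real"
proof -
  have "length (filter (\<lambda>z. z \<le> d) (sorted_entries x)) = size (filter_mset (\<lambda>z. z \<le> d) (mset (sorted_entries x)))"
    by (metis mset_filter size_mset)
  also have "\<dots> = size (filter_mset (\<lambda>z. z \<le> d) (image_mset x (mset_set UNIV)))"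
    by (simp add: sorted_entries_def)
  also have "\<dots> = card {i. x i \<le> d}"
    by (simp add: filter_mset_image_mset)
  finally show ?thesis .
qed

lemma drop_ge: assumes "sorted L" "z \<in> set (drop k L)" shows "L ! k \<le> z"
proof -
  from assms(2) obtain m where m: "m < length (drop k L)" "z = drop k L ! m"
    by (auto simp: in_set_conv_nth)
  hence "z = L ! (k + m)" "k + m < length L" by auto
  thus ?thesis using sorted_nth_mono[OF assms(1), of k "k+m"] by simp
qed

lemma lex_dom_count:
  fixes x y :: "'b::finite \<Rightarrow> real"
  assumes "leximin_dominates y x"
  shows "\<exists>c. (\<forall>d<c. card {i. y i \<le> d} = card {i. x i \<le> d}) \<and> card {i. y i \<le> c} < card {i. x i \<le> c}"
proof -
  define Lx where "Lx = sorted_entries x"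
  define Ly where "Ly = sorted_entries y"
  obtain k where k: "k < card (UNIV::'b set)" "\<forall>j<k. Ly ! j = Lx ! j" "Ly ! k > Lx ! k"
    using assms unfolding leximin_dominates_def Lx_def Ly_def by blast
  have lx: "length Lx = card (UNIV::'b set)" and ly: "length Ly = card (UNIV::'b set)"
    by (simp_all add: Lx_def Ly_def se_length)
  have sx: "sorted Lx" and sy: "sorted Ly" by (simp_all add: Lx_def Ly_def se_sorted)
  have tk: "take k Ly = take k Lx"
    by (rule nth_equalityI) (use k lx ly in auto)
  define c where "c = Lx ! k"
  have split: "length (filter P L) = length (filter P (take k L)) + length (filter P (drop k L))" for P and L :: "real list"
    by (metis append_take_drop_id filter_append length_append)
  have dy: "filter (\<lambda>z. z \<le> d) (drop k Ly) = []" if "d \<le> c" for d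
  proof -
    have "\<forall>z\<in>set (drop k Ly). \<not> z \<le> d"
      using drop_ge[OF sy] k(3) that c_def by fastforce
    thus ?thesis by (simp add: filter_empty_conv)
  qed
  have dx: "filter (\<lambda>z. z \<le> d) (drop k Lx) = []" if "d < c" for d
  proof -
    have "\<forall>z\<in>set (drop k Lx). \<not> z \<le> d"
      using drop_ge[OF sx] that c_def by fastforce
    thus ?thesis by (simp add: filter_empty_conv)
  qed
  have cx: "filter (\<lambda>z. z \<le> c) (drop k Lx) \<noteq> []"
  proof -
    have "c \<in> set (drop k Lx)" using k(1) lx c_def
      by (metis Cons_nth_drop_Suc list.set_intros(1))
    thus ?thesis by (auto simp: filter_empty_conv)
  qed
  show ?thesis
  proof (intro exI conjI allI impI)
    fix d assume "d < c"
    then show "card {i. y i \<le> d} = card {i. x i \<le> d}"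
      using split[of "\<lambda>z. z \<le> d" Ly] split[of "\<lambda>z. z \<le> d" Lx] dy[of d] dx[of d] tk
      by (simp add: se_count[symmetric] Lx_def Ly_def)
  next
    show "card {i. y i \<le> c} < card {i. x i \<le> c}"
      using split[of "\<lambda>z. z \<le> c" Ly] split[of "\<lambda>z. z \<le> c" Lx] dy[of c] cx tk
      by (simp add: se_count[symmetric] Lx_def Ly_def)
  qed
qed

lemma finite_vals: "finite {(\<Sum>i\<in>S. v i (a i)) | a. feasible_alloc S a}"
  for v :: "'b::finite \<Rightarrow> 'm::finite set \<Rightarrow> real"
proof -
  have "{(\<Sum>i\<in>S. v i (a i)) | a. feasible_alloc S a} \<subseteq> (\<lambda>a. \<Sum>i\<in>S. v i (a i)) ` UNIV" by blast
  thus ?thesis by (rule finite_subset) simp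
qed

lemma coal_ge: "feasible_alloc S a \<Longrightarrow> (\<Sum>i\<in>S. v i (a i)) \<le> coal_value v S"
  for v :: "'b::finite \<Rightarrow> 'm::finite set \<Rightarrow> real"
  unfolding coal_value_def by (rule Max_ge[OF finite_vals]) blast

lemma coal_attained: "\<exists>a. feasible_alloc S a \<and> coal_value v S = (\<Sum>i\<in>S. v i (a i))"
  for v :: "'b::finite \<Rightarrow> 'm::finite set \<Rightarrow> real"
proof -
  have "feasible_alloc S (\<lambda>_. {})" by (simp add: feasible_alloc_def)
  hence ne: "{(\<Sum>i\<in>S. v i (a i)) | a. feasible_alloc S a} \<noteq> {}" by blast
  have "coal_value v S \<in> {(\<Sum>i\<in>S. v i (a i)) | a. feasible_alloc S a}"
    unfolding coal_value_def by (rule Max_in[OF finite_vals ne])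
  thus ?thesis by blast
qed

lemma coal_le_UNIV:
  fixes v :: "'b::finite \<Rightarrow> 'm::finite set \<Rightarrow> real"
  assumes "\<And>i. v i {} = 0" shows "coal_value v S \<le> coal_value v UNIV"
proof -
  obtain a where a: "feasible_alloc S a" "coal_value v S = (\<Sum>i\<in>S. v i (a i))"
    using coal_attained by blast
  define a' where "a' = (\<lambda>i. if i \<in> S then a i else {})"
  have f: "feasible_alloc UNIV a'" using a(1) by (auto simp: feasible_alloc_def a'_def)
  have "(\<Sum>i\<in>UNIV. v i (a' i)) = (\<Sum>i\<in>S. v i (a' i))"
    by (rule sum.mono_neutral_right) (auto simp: a'_def assms)
  also have "\<dots> = (\<Sum>i\<in>S. v i (a i))" by (simp add: a'_def)
  finally show ?thesis using coal_ge[OF f, of v] a(2) by simp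
qed

lemma loser_zero:
  fixes v :: "'b::finite \<Rightarrow> 'm::finite set \<Rightarrow> real"
  assumes "\<And>i. v i {} = 0" "feasible_alloc UNIV astar"
    "(\<Sum>i\<in>UNIV. v i (astar i)) = coal_value v UNIV" "astar i = {}" "y \<in> core v"
  shows "y i = 0"
proof -
  have f: "feasible_alloc (UNIV - {i}) astar" using assms(2) by (auto simp: feasible_alloc_def)
  have "coal_value v UNIV = (\<Sum>j\<in>UNIV - {i}. v j (astar j)) + v i (astar i)"
    using assms(3) by (metis add.commute finite_class.finite_UNIV iso_tuple_UNIV_I sum.remove)
  also have "\<dots> = (\<Sum>j\<in>UNIV - {i}. v j (astar j))" using assms(1,4) by simp
  also have "\<dots> \<le> coal_value v (UNIV - {i})" by (rule coal_ge[OF f])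
  finally have le: "coal_value v UNIV \<le> coal_value v (UNIV - {i})" .
  have "(\<Sum>j\<in>UNIV - (UNIV - {i}). y j) \<le> coal_value v UNIV - coal_value v (UNIV - {i})"
    using assms(5) unfolding core_def by blast
  moreover have "UNIV - (UNIV - {i}) = {i}" by blast
  ultimately have "y i \<le> 0" using le by simp
  moreover have "0 \<le> y i" using assms(5) unfolding core_def by blast
  ultimately show ?thesis by simp
qed

lemma ratio_finite: "finite {wf_ratio v p Wa S | S. \<not> Wa \<subseteq> S}"
  for v :: "'b::finite \<Rightarrow> 'm set \<Rightarrow> real"
proof -
  have "{wf_ratio v p Wa S | S. \<not> Wa \<subseteq> S} \<subseteq> wf_ratio v p Wa ` UNIV" by blast
  thus ?thesis by (rule finite_subset) simp
qed

lemma delta_le: "\<not> Wa \<subseteq> S \<Longrightarrow> wf_delta v p Wa \<le> wf_ratio v p Wa S"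
  for v :: "'b::finite \<Rightarrow> 'm set \<Rightarrow> real"
  unfolding wf_delta_def by (rule Min_le[OF ratio_finite]) blast

lemma delta_nonneg:
  fixes v :: "'b::finite \<Rightarrow> 'm set \<Rightarrow> real"
  assumes "p \<in> core v" "Wa \<noteq> {}" shows "0 \<le> wf_delta v p Wa"
proof -
  have ne: "{wf_ratio v p Wa S | S. \<not> Wa \<subseteq> S} \<noteq> {}" using assms(2) by blast
  have "wf_delta v p Wa \<in> {wf_ratio v p Wa S | S. \<not> Wa \<subseteq> S}"
    unfolding wf_delta_def by (rule Min_in[OF ratio_finite ne])
  then obtain S where "wf_delta v p Wa = wf_ratio v p Wa S" by blast
  moreover have "0 \<le> coal_value v UNIV - coal_value v S - (\<Sum>i\<in>UNIV - S. p i)"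
    using assms(1) unfolding core_def by auto
  ultimately show ?thesis unfolding wf_ratio_def by simp
qed

lemma sum_shift:
  fixes A :: "'b::finite set"
  assumes "\<forall>i. p' i = (if i \<in> Wa then p i + D else (p i::real))"
  shows "(\<Sum>i\<in>A. p' i) = (\<Sum>i\<in>A. p i) + D * real (card (A \<inter> Wa))"
proof -
  have "(\<Sum>i\<in>A. p' i) = (\<Sum>i\<in>A. p i + (if i \<in> Wa then D else 0))"
    using assms by (intro sum.cong) auto
  also have "\<dots> = (\<Sum>i\<in>A. p i) + (\<Sum>i\<in>A. if i \<in> Wa then D else 0)" by (simp add: sum.distrib)
  also have "(\<Sum>i\<in>A. if i \<in> Wa then D else 0) = (\<Sum>i\<in>A \<inter> Wa. D)"
    using sum.inter_restrict[of A "\<lambda>_. D" Wa] by simp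
  finally show ?thesis by simp
qed

lemma step_core:
  fixes v :: "'b::finite \<Rightarrow> 'm set \<Rightarrow> real"
  assumes "\<forall>i. p' i = (if i \<in> Wa then p i + wf_delta v p Wa else p i)" "p \<in> core v" "Wa \<noteq> {}"
  shows "p' \<in> core v"
proof -
  let ?D = "wf_delta v p Wa"
  have D0: "0 \<le> ?D" by (rule delta_nonneg[OF assms(2,3)])
  have "0 \<le> p' i" for i using assms(1,2) D0 unfolding core_def by (auto split: if_splits)
  moreover have "(\<Sum>i\<in>UNIV - S. p' i) \<le> coal_value v UNIV - coal_value v S" for S
  proof -
    have e: "(\<Sum>i\<in>UNIV - S. p' i) = (\<Sum>i\<in>UNIV - S. p i) + ?D * real (card ((UNIV - S) \<inter> Wa))"
      by (rule sum_shift[OF assms(1)])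
    have eq: "(UNIV - S) \<inter> Wa = Wa - S" by blast
    have c: "(\<Sum>i\<in>UNIV - S. p i) \<le> coal_value v UNIV - coal_value v S"
      using assms(2) unfolding core_def by blast
    show ?thesis
    proof (cases "Wa \<subseteq> S")
      case True
      hence "Wa - S = {}" by blast
      hence z: "real (card ((UNIV - S) \<inter> Wa)) = 0" using eq by simp
      show ?thesis by (simp only: e z mult_zero_right add_0_right) (rule c)
    next
      case False
      hence pos: "0 < real (card (Wa - S))" by (simp add: card_gt_0_iff)
      have "?D \<le> wf_ratio v p Wa S" by (rule delta_le[OF False])
      hence "?D * real (card (Wa - S)) \<le> coal_value v UNIV - coal_value v S - (\<Sum>i\<in>UNIV - S. p i)"
        unfolding wf_ratio_def using pos by (simp add: le_divide_eq)
      thus ?thesis using e eq by simp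
    qed
  qed
  ultimately show ?thesis unfolding core_def by blast
qed

lemma step_tight:
  fixes v :: "'b::finite \<Rightarrow> 'm set \<Rightarrow> real"
  assumes "\<forall>i. p' i = (if i \<in> Wa then p i + wf_delta v p Wa else p i)"
    "\<not> Wa \<subseteq> S" "wf_ratio v p Wa S = wf_delta v p Wa"
  shows "(\<Sum>i\<in>UNIV - S. p' i) = coal_value v UNIV - coal_value v S"
proof -
  have e: "(\<Sum>i\<in>UNIV - S. p' i) = (\<Sum>i\<in>UNIV - S. p i) + wf_delta v p Wa * real (card ((UNIV - S) \<inter> Wa))"
    by (rule sum_shift[OF assms(1)])
  have eq: "(UNIV - S) \<inter> Wa = Wa - S" by blast
  have pos: "0 < real (card (Wa - S))" using assms(2) by (simp add: card_gt_0_iff)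
  have "wf_delta v p Wa * real (card (Wa - S)) = coal_value v UNIV - coal_value v S - (\<Sum>i\<in>UNIV - S. p i)"
    using assms(2,3) pos unfolding wf_ratio_def by (auto simp add: divide_eq_eq)
  thus ?thesis using e eq by simp
qed

theorem lemma2:
  fixes v :: "'b::finite \<Rightarrow> 'm::finite set \<Rightarrow> real"
    and astar :: "'b \<Rightarrow> 'm set"
    and \<pi> :: "nat \<Rightarrow> 'b \<Rightarrow> real"
    and Wa :: "nat \<Rightarrow> 'b set"
  assumes v_nonneg: "\<And>i A. 0 \<le> v i A"
    and v_empty: "\<And>i. v i {} = 0"
    and astar_feasible: "feasible_alloc UNIV astar"
    and astar_opt: "(\<Sum>i\<in>UNIV. v i (astar i)) = coal_value v UNIV"
    and init_pi: "\<pi> 0 = (\<lambda>i. 0)"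
    and init_W: "Wa 0 = {i. astar i \<noteq> {}}"
    and steps: "\<And>t. Wa t \<noteq> {} \<Longrightarrow> wf_step v (\<pi> t) (Wa t) (\<pi> (Suc t)) (Wa (Suc t))"
  shows "\<exists>T. T \<le> card {i. astar i \<noteq> {}} \<and> Wa T = {} \<and> (\<forall>t<T. Wa t \<noteq> {})
             \<and> BLO_outcome v (\<pi> T)"
proof -
  have stepE: "\<exists>S. \<not> Wa t \<subseteq> S \<and> wf_ratio v (\<pi> t) (Wa t) S = wf_delta v (\<pi> t) (Wa t) \<and>
        (\<forall>i. \<pi> (Suc t) i = (if i \<in> Wa t then \<pi> t i + wf_delta v (\<pi> t) (Wa t) else \<pi> t i)) \<and>
        Wa (Suc t) = Wa t - (Wa t - S)" if "Wa t \<noteq> {}" for t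
    using steps[OF that] unfolding wf_step_def by blast
  have psub: "Wa (Suc t) \<subset> Wa t" if "Wa t \<noteq> {}" for t
    using stepE[OF that] by blast
  have cnt: "(\<forall>s<t. Wa s \<noteq> {}) \<longrightarrow> card (Wa t) + t \<le> card (Wa 0)" for t
  proof (induction t)
    case 0 show ?case by simp
  next
    case (Suc t)
    show ?case
    proof
      assume a: "\<forall>s<Suc t. Wa s \<noteq> {}"
      hence "card (Wa (Suc t)) < card (Wa t)" using psub[of t] by (simp add: psubset_card_mono)
      with Suc a show "card (Wa (Suc t)) + Suc t \<le> card (Wa 0)" by simp
    qed
  qed
  have ex: "\<exists>t. Wa t = {}"
  proof (rule ccontr)
    assume "\<not> ?thesis"
    hence "\<forall>s<Suc (card (Wa 0)). Wa s \<noteq> {}" by blast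
    with cnt[of "Suc (card (Wa 0))"] show False by simp
  qed
  define T where "T = (LEAST t. Wa t = {})"
  have WT: "Wa T = {}" unfolding T_def by (rule LeastI_ex[OF ex])
  have before: "\<forall>t<T. Wa t \<noteq> {}" unfolding T_def using not_less_Least by blast
  have Tle: "T \<le> card {i. astar i \<noteq> {}}"
    using cnt[of T] before init_W by simp
  have mono: "Wa s \<subseteq> Wa t \<and> (\<forall>k. k \<notin> Wa t \<longrightarrow> \<pi> s k = \<pi> t k)" if "t \<le> s" "s \<le> T" for t s
    using that
  proof (induction s rule: dec_induct)
    case base then show ?case by simp
  next
    case (step s)
    have ne: "Wa s \<noteq> {}" using before step by simp
    obtain S where S: "\<forall>i. \<pi> (Suc s) i = (if i \<in> Wa s then \<pi> s i + wf_delta v (\<pi> s) (Wa s) else \<pi> s i)"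
      "Wa (Suc s) = Wa s - (Wa s - S)" using stepE[OF ne] by blast
    have IH: "Wa s \<subseteq> Wa t \<and> (\<forall>k. k \<notin> Wa t \<longrightarrow> \<pi> s k = \<pi> t k)" using step by simp
    show ?case using IH S by auto
  qed
  define Inv where "Inv t \<longleftrightarrow> \<pi> t \<in> core v \<and> (\<forall>i\<in>Wa t. \<forall>j. \<pi> t j \<le> \<pi> t i)" for t
  have inv: "t \<le> T \<Longrightarrow> Inv t" for t
  proof (induction t)
    case 0
    have "(\<lambda>i. 0::real) \<in> core v" unfolding core_def using coal_le_UNIV[of v, OF v_empty] by simp
    thus ?case unfolding Inv_def using init_pi by simp
  next
    case (Suc t)
    hence I: "Inv t" and ne: "Wa t \<noteq> {}" using before by auto
    obtain S where S: "\<forall>i. \<pi> (Suc t) i = (if i \<in> Wa t then \<pi> t i + wf_delta v (\<pi> t) (Wa t) else \<pi> t i)"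
      "Wa (Suc t) = Wa t - (Wa t - S)" using stepE[OF ne] by blast
    have core: "\<pi> t \<in> core v" using I Inv_def by simp
    have D0: "0 \<le> wf_delta v (\<pi> t) (Wa t)" by (rule delta_nonneg[OF core ne])
    have c: "\<pi> (Suc t) \<in> core v" by (rule step_core[OF S(1) core ne])
    have "\<forall>i\<in>Wa (Suc t). \<forall>j. \<pi> (Suc t) j \<le> \<pi> (Suc t) i"
    proof (intro ballI allI)
      fix i j assume i: "i \<in> Wa (Suc t)"
      hence it: "i \<in> Wa t" using S(2) by blast
      have "\<pi> t j \<le> \<pi> t i" using I it Inv_def by blast
      thus "\<pi> (Suc t) j \<le> \<pi> (Suc t) i" using S(1) it D0 by (cases "j \<in> Wa t") auto
    qed
    with c show ?case unfolding Inv_def by blast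
  qed
  define x where "x = \<pi> T"
  have xcore: "x \<in> core v" using inv[of T] unfolding Inv_def x_def by simp
  have frz: "\<exists>t<n. i \<in> Wa t \<and> i \<notin> Wa (Suc t)" if "i \<in> Wa 0" "i \<notin> Wa n" for i n
    using that(2)
  proof (induction n)
    case 0 with that(1) show ?case by simp
  next
    case (Suc n)
    show ?case
    proof (cases "i \<in> Wa n")
      case True with Suc show ?thesis by blast
    next
      case False with Suc.IH show ?thesis using less_Suc_eq by blast
    qed
  qed
  have freeze: "\<exists>S. i \<notin> S \<and> (\<forall>k. k \<notin> S \<longrightarrow> x k \<le> x i) \<and>
      (\<Sum>k\<in>UNIV - S. x k) = coal_value v UNIV - coal_value v S" if win0: "i \<in> Wa 0" for i
  proof -
    obtain t where t: "t < T" "i \<in> Wa t" "i \<notin> Wa (Suc t)" using frz[OF win0, of T] WT by blast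
    have ne: "Wa t \<noteq> {}" using t by blast
    obtain S where S: "\<not> Wa t \<subseteq> S" "wf_ratio v (\<pi> t) (Wa t) S = wf_delta v (\<pi> t) (Wa t)"
      "\<forall>i. \<pi> (Suc t) i = (if i \<in> Wa t then \<pi> t i + wf_delta v (\<pi> t) (Wa t) else \<pi> t i)"
      "Wa (Suc t) = Wa t - (Wa t - S)" using stepE[OF ne] by blast
    have iS: "i \<notin> S" using t S(4) by blast
    have I: "Inv t" using inv t by simp
    have D0: "0 \<le> wf_delta v (\<pi> t) (Wa t)" using delta_nonneg[OF _ ne] I Inv_def by blast
    have xeq: "x k = \<pi> (Suc t) k" if "k \<notin> S" for k
    proof -
      have "k \<notin> Wa (Suc t)" using that S(4) by blast
      thus ?thesis using mono[of "Suc t" T] t(1) unfolding x_def by simp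
    qed
    have "x k \<le> x i" if "k \<notin> S" for k
    proof -
      have "\<pi> t k \<le> \<pi> t i" using I t(2) Inv_def by blast
      hence "\<pi> (Suc t) k \<le> \<pi> (Suc t) i" using S(3) t(2) D0 by (cases "k \<in> Wa t") auto
      thus ?thesis using xeq[OF that] xeq[OF iS] by simp
    qed
    moreover have "(\<Sum>k\<in>UNIV - S. x k) = coal_value v UNIV - coal_value v S"
    proof -
      have "(\<Sum>k\<in>UNIV - S. x k) = (\<Sum>k\<in>UNIV - S. \<pi> (Suc t) k)" using xeq by (intro sum.cong) auto
      also have "\<dots> = coal_value v UNIV - coal_value v S" by (rule step_tight[OF S(3) S(1) S(2)])
      finally show ?thesis .
    qed
    ultimately show ?thesis using iS by blast
  qed
  have dev: "\<exists>c. (\<forall>i. x i \<noteq> y i \<longrightarrow> c \<le> y i \<and> c < x i) \<and> (\<exists>j. x j \<noteq> y j \<and> y j = c)"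
    if y: "y \<in> core v" "y \<noteq> x" for y
  proof -
    define D where "D = {i. x i \<noteq> y i}"
    have Dne: "D \<noteq> {}" using y(2) unfolding D_def by auto
    define c where "c = Min ((\<lambda>i. min (x i) (y i)) ` D)"
    have cle: "c \<le> min (x i) (y i)" if "i \<in> D" for i unfolding c_def by (rule Min_le) (simp_all add: that)
    have "c \<in> (\<lambda>i. min (x i) (y i)) ` D" unfolding c_def by (rule Min_in) (simp_all add: Dne)
    then obtain j0 where j0: "j0 \<in> D" "c = min (x j0) (y j0)" by blast
    have nx: "x i \<noteq> c" if "i \<in> D" for i
    proof
      assume xi: "x i = c"
      have yi: "c < y i" using cle[OF that] xi that unfolding D_def by auto
      have win: "i \<in> Wa 0"
      proof (rule ccontr)
        assume "i \<notin> Wa 0"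
        hence "astar i = {}" using init_W by simp
        hence "x i = 0" "y i = 0"
          using loser_zero[OF v_empty astar_feasible astar_opt _ xcore]
            loser_zero[OF v_empty astar_feasible astar_opt _ y(1)] by auto
        thus False using that unfolding D_def by simp
      qed
      obtain S where S: "i \<notin> S" "\<forall>k. k \<notin> S \<longrightarrow> x k \<le> x i"
        "(\<Sum>k\<in>UNIV - S. x k) = coal_value v UNIV - coal_value v S" using freeze[OF win] by blast
      have "(\<Sum>k\<in>UNIV - S. x k) < (\<Sum>k\<in>UNIV - S. y k)"
      proof (rule sum_strict_mono_ex1)
        show "finite (UNIV - S)" by simp
        show "\<forall>k\<in>UNIV - S. x k \<le> y k"
        proof
          fix k assume k: "k \<in> UNIV - S"
          show "x k \<le> y k"
          proof (cases "k \<in> D")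
            case True
            have "x k \<le> c" using S(2) k xi by auto
            moreover have "c \<le> y k" using cle[OF True] by simp
            ultimately show ?thesis by linarith
          next
            case False thus ?thesis unfolding D_def by simp
          qed
        qed
        show "\<exists>k\<in>UNIV - S. x k < y k" using S(1) xi yi by blast
      qed
      moreover have "(\<Sum>k\<in>UNIV - S. y k) \<le> coal_value v UNIV - coal_value v S"
        using y(1) unfolding core_def by blast
      ultimately show False using S(3) by simp
    qed
    show ?thesis
    proof (intro exI conjI allI impI)
      fix i assume "x i \<noteq> y i"
      hence iD: "i \<in> D" unfolding D_def by simp
      show "c \<le> y i" using cle[OF iD] by simp
      show "c < x i" using cle[OF iD] nx[OF iD] by simp
    next
      show "x j0 \<noteq> y j0" using j0 D_def by simp
      show "y j0 = c" using j0 nx[OF j0(1)] by (auto simp: min_def split: if_splits)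
    qed
  qed
  have nodom: "\<not> leximin_dominates y x" if y: "y \<in> core v" for y
  proof
    assume dom: "leximin_dominates y x"
    show False
    proof (cases "y = x")
      case True thus False using dom unfolding leximin_dominates_def by auto
    next
      case False
      obtain c j where c: "\<forall>i. x i \<noteq> y i \<longrightarrow> c \<le> y i \<and> c < x i" and j: "x j \<noteq> y j" "y j = c"
        using dev[OF y False] by blast
      obtain c' where c': "\<forall>d<c'. card {i. y i \<le> d} = card {i. x i \<le> d}"
        "card {i. y i \<le> c'} < card {i. x i \<le> c'}" using lex_dom_count[OF dom] by blast
      have below: "{i. y i \<le> d} = {i. x i \<le> d}" if "d < c" for d
      proof (rule Collect_cong)
        fix i show "y i \<le> d \<longleftrightarrow> x i \<le> d"
          using c[rule_format, of i] that by (cases "x i = y i") auto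
      qed
      have at: "card {i. x i \<le> c} < card {i. y i \<le> c}"
      proof (rule psubset_card_mono)
        show "finite {i. y i \<le> c}" by simp
        have sub: "{i. x i \<le> c} \<subseteq> {i. y i \<le> c}"
        proof
          fix i assume "i \<in> {i. x i \<le> c}"
          thus "i \<in> {i. y i \<le> c}" using c[rule_format, of i] by (cases "x i = y i") auto
        qed
        have "j \<in> {i. y i \<le> c}" "j \<notin> {i. x i \<le> c}" using j c by auto
        thus "{i. x i \<le> c} \<subset> {i. y i \<le> c}" using sub by blast
      qed
      show False
      proof (cases c' c rule: linorder_cases)
        case less thus False using below[OF less] c'(2) by simp
      next
        case equal thus False using at c'(2) by simp
      next
        case greater thus False using c'(1)[rule_format, OF greater] at by simp
      qed
    qed
  qed
  have "BLO_outcome v x" unfolding BLO_outcome_def using xcore nodom by blast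
  thus ?thesis using Tle WT before unfolding x_def by blast
qed

end
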